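(* Let $\mathcal{I}=(N,M,\mathcal{V})$ be an ordered instance with $n$ agents and goods $M=[m]$, and let $i\in N$. (1) If $g_1\ge 2n-1$, $g_2\ge 2n$ and $g_3\ge 2n+1$ are goods, then $\mathrm{MMS}^{n-1}_{v_i}(M\setminus\{g_1,g_2,g_3\})\ge\mathrm{MMS}^n_{v_i}(M)$. (2) If $g_1\ge 3n-2$, $g_2\ge 3n-1$, $g_3\ge 3n$ and $g_4\ge 3n+1$ are goods, then $\mathrm{MMS}^{n-1}_{v_i}(M\setminus\{g_1,g_2,g_3,g_4\})\ge\mathrm{MMS}^n_{v_i}(M)$.
   Context: Valuations are additive; the instance is ordered if $v_i(1)\ge v_i(2)\ge\dots\ge v_i(m)$ for all agents $i$. $\mathrm{MMS}^d_v(S)$ is the maximum over all partitions of $S$ into $d$ (possibly empty) bundles of the minimum bundle value under $v$. *)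

theory Defs
  imports Complex_Main
begin

definition is_d_partition :: "nat \<Rightarrow> nat set \<Rightarrow> (nat \<Rightarrow> nat set) \<Rightarrow> bool" where
  "is_d_partition d S P \<longleftrightarrow>
     (\<Union>k<d. P k) = S \<and> (\<forall>k<d. \<forall>l<d. k \<noteq> l \<longrightarrow> P k \<inter> P l = {})"

definition MMS :: "nat \<Rightarrow> (nat \<Rightarrow> real) \<Rightarrow> nat set \<Rightarrow> real" where
  "MMS d v S = Sup {Min ((\<lambda>k. \<Sum>g\<in>P k. v g) ` {..<d}) | P. is_d_partition d S P}"

definition ordered_instance :: "nat \<Rightarrow> nat \<Rightarrow> (nat \<Rightarrow> nat \<Rightarrow> real) \<Rightarrow> bool" where
  "ordered_instance n m V \<longleftrightarrow>
     (\<forall>i\<in>{1..n}. (\<forall>g\<in>{1..m}. V i g \<ge> 0) \<and>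
        (\<forall>g h. 1 \<le> g \<longrightarrow> g \<le> h \<longrightarrow> h \<le> m \<longrightarrow> V i h \<le> V i g))"

end

theory Submission
  imports Defs
begin

lemma key:
  fixes v :: "nat \<Rightarrow> real"
  assumes nonneg: "\<forall>g\<in>{1..m}. v g \<ge> 0"
    and mono: "\<forall>g h. 1 \<le> g \<longrightarrow> g \<le> h \<longrightarrow> h \<le> m \<longrightarrow> v h \<le> v g"
    and n2: "n \<ge> 2" and GM: "G \<subseteq> {1..m}" and cG: "card G = k" and k1: "k \<ge> 1"
    and big: "\<forall>g\<in>G. (k-1)*(n-1) < g"
    and P: "is_d_partition n {1..m} P"
  shows "\<exists>Q. is_d_partition (n-1) ({1..m} - G) Q \<and>
     Min ((\<lambda>j. \<Sum>g\<in>P j. v g) ` {..<n}) \<le> Min ((\<lambda>j. \<Sum>g\<in>Q j. v g) ` {..<n-1})"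
proof -
  let ?M = "{1..m::nat}"
  define t where "t = (k-1)*(n-1)"
  define Sm where "Sm = {1..t}"
  have finG: "finite G" using GM finite_subset by blast
  obtain g0 where g0: "g0 \<in> G" using cG k1 by fastforce
  have "t < m" using g0 big GM t_def by fastforce
  have SmM: "Sm \<subseteq> ?M" using \<open>t < m\<close> Sm_def by auto
  have SmG: "Sm \<inter> G = {}" using big by (auto simp: Sm_def t_def)
  have Pu: "(\<Union>j<n. P j) = ?M" and Pd: "\<forall>j<n. \<forall>l<n. j\<noteq>l \<longrightarrow> P j \<inter> P l = {}"
    using P unfolding is_d_partition_def by auto
  have PM: "\<And>j. j<n \<Longrightarrow> P j \<subseteq> ?M" using Pu by blast
  define T where "T = Sm \<union> G"
  have cT: "card T = t + k" unfolding T_def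
    using card_Un_disjoint[of Sm G] SmG finG cG by (simp add: Sm_def)
  have TM: "T \<subseteq> ?M" using SmM GM T_def by auto
  have finT: "finite T" using TM finite_subset by blast
  have "\<exists>b<n. k \<le> card (P b \<inter> T)"
  proof (rule ccontr)
    assume "\<not> ?thesis"
    hence lt: "\<forall>j<n. card (P j \<inter> T) \<le> k - 1" by auto
    have "(\<Union>j<n. P j \<inter> T) = T" using Pu TM by blast
    hence "card T = card (\<Union>j<n. P j \<inter> T)" by simp
    also have "\<dots> = (\<Sum>j<n. card (P j \<inter> T))"
      by (rule card_UN_disjoint) (use finT Pd in auto)
    also have "\<dots> \<le> (\<Sum>j<n. (k-1))" by (rule sum_mono) (use lt in auto)
    also have "\<dots> = n*(k-1)" by simp
    finally have "t + k \<le> n * (k-1)" using cT by simp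
    moreover obtain n' where "n = Suc n'" using n2 by (cases n) auto
    moreover obtain k' where "k = Suc k'" using k1 by (cases k) auto
    ultimately show False unfolding t_def by (simp add: algebra_simps)
  qed
  then obtain b where b: "b < n" "k \<le> card (P b \<inter> T)" by blast
  have finPb: "finite (P b)" using PM[OF b(1)] finite_subset by blast
  have "P b \<inter> T = (P b \<inter> Sm) \<union> (P b \<inter> G)" using T_def by auto
  hence cPT: "card (P b \<inter> T) = card (P b \<inter> Sm) + card (P b \<inter> G)"
    using card_Un_disjoint[of "P b \<inter> Sm" "P b \<inter> G"] finPb SmG by auto
  have "card (G - P b) = card G - card (G \<inter> P b)"
    by (rule card_Diff_subset_Int) (use finG in auto)
  hence "card (G - P b) \<le> card (P b \<inter> Sm)" using cPT b(2) cG
    by (simp add: Int_commute)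
  then obtain X where X: "X \<subseteq> P b \<inter> Sm" "card X = card (G - P b)"
    by (meson obtain_subset_with_card_n)
  have finX: "finite X" using X(1) finPb finite_subset by blast
  obtain f where f: "bij_betw f (G - P b) X"
    using finite_same_card_bij[of "G - P b" X] finG finX X(2) by auto
  define pidx where "pidx y = (SOME j. j < n \<and> y \<in> P j)" for y
  have pidx: "pidx y < n \<and> y \<in> P (pidx y)" if "y \<in> ?M" for y
  proof -
    have "\<exists>j. j < n \<and> y \<in> P j" using that Pu by blast
    thus ?thesis unfolding pidx_def by (rule someI_ex)
  qed
  have pidx_eq: "pidx y = j" if "j < n" "y \<in> P j" for y j
  proof -
    have "y \<in> ?M" using that PM by blast
    thus ?thesis using pidx[of y] Pd that by blast
  qed
  define c where "c = (if b = 0 then 1 else (0::nat))"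
  have c: "c < n" "c \<noteq> b" using n2 c_def by auto
  define own where "own x = (if x \<notin> P b then pidx x
      else if x \<in> X then pidx (inv_into (G - P b) f x) else c)" for x
  have own: "own x < n \<and> own x \<noteq> b" if "x \<in> ?M - G" for x
  proof (cases "x \<notin> P b")
    case True
    then show ?thesis using pidx[of x] that unfolding own_def by auto
  next
    case False
    show ?thesis
    proof (cases "x \<in> X")
      case True
      have "inv_into (G - P b) f x \<in> G - P b"
        using bij_betw_inv_into[OF f] True bij_betwE by blast
      then show ?thesis using pidx[of "inv_into (G - P b) f x"] GM False True
        unfolding own_def by auto
    next
      case False2: False
      then show ?thesis using False c unfolding own_def by auto
    qed
  qed
  have vf: "v g \<le> v (f g)" if "g \<in> G - P b" for g
  proof -
    have "f g \<in> X" using f that bij_betwE by blast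
    hence "1 \<le> f g" "f g \<le> t" using X(1) Sm_def by auto
    moreover have "t < g" "g \<le> m" using that big GM t_def by auto
    ultimately show ?thesis using mono by auto
  qed
  have Rsup: "sum v (P j) \<le> sum v {x \<in> ?M - G. own x = j}" if j: "j<n" "j\<noteq>b" for j
  proof -
    let ?A = "P j - G" let ?B = "f ` (P j \<inter> G)"
    have Pjb: "P j \<inter> P b = {}" using Pd j b by auto
    have sub1: "P j \<inter> G \<subseteq> G - P b" using Pjb by auto
    have injf: "inj_on f (P j \<inter> G)"
      using bij_betw_imp_inj_on[OF f] sub1 inj_on_subset by blast
    have BX: "?B \<subseteq> X" using f sub1 bij_betwE by blast
    have sub: "?A \<union> ?B \<subseteq> {x \<in> ?M - G. own x = j}"
    proof
      fix x assume "x \<in> ?A \<union> ?B"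
      then show "x \<in> {x \<in> ?M - G. own x = j}"
      proof
        assume xA: "x \<in> ?A"
        hence "x \<notin> P b" using Pjb by auto
        moreover have "x \<in> ?M" using xA PM j by blast
        ultimately show ?thesis using xA pidx_eq[OF j(1)] unfolding own_def by auto
      next
        assume "x \<in> ?B"
        then obtain g where g: "g \<in> P j \<inter> G" "x = f g" by blast
        have xX: "x \<in> X" using g BX by blast
        hence "x \<in> P b" "x \<in> Sm" using X(1) by auto
        hence "x \<in> ?M - G" using SmM SmG by auto
        moreover have "inv_into (G - P b) f x = g"
          using g sub1 bij_betw_inv_into_left[OF f] by auto
        ultimately show ?thesis using xX \<open>x \<in> P b\<close> g pidx_eq[OF j(1)]
          unfolding own_def by auto
      qed
    qed
    have disj: "?A \<inter> ?B = {}" using BX X(1) Pjb by auto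
    have finPj: "finite (P j)" using PM[OF j(1)] finite_subset by blast
    have "sum v (P j) = sum v (P j \<inter> G) + sum v ?A"
      using sum.Int_Diff[OF finPj] by blast
    also have "sum v (P j \<inter> G) \<le> sum v ?B"
    proof -
      have "sum v ?B = sum (v \<circ> f) (P j \<inter> G)" by (rule sum.reindex[OF injf])
      moreover have "sum v (P j \<inter> G) \<le> sum (v \<circ> f) (P j \<inter> G)"
        by (rule sum_mono) (use vf sub1 in auto)
      ultimately show ?thesis by simp
    qed
    hence "sum v (P j \<inter> G) + sum v ?A \<le> sum v ?B + sum v ?A" by simp
    also have "\<dots> = sum v (?A \<union> ?B)"
      using sum.union_disjoint[of ?A ?B v] finPj disj by auto
    also have "\<dots> \<le> sum v {x \<in> ?M - G. own x = j}"
      by (rule sum_mono2) (use sub nonneg in auto)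
    finally show ?thesis .
  qed
  define \<sigma> where "\<sigma> j = (if j = b then n-1 else j)" for j
  define Q where "Q j = {x \<in> ?M - G. own x = \<sigma> j}" for j
  have part: "is_d_partition (n-1) (?M - G) Q"
    unfolding is_d_partition_def
  proof (intro conjI allI impI)
    show "(\<Union>j<n-1. Q j) = ?M - G"
    proof
      show "(\<Union>j<n-1. Q j) \<subseteq> ?M - G" unfolding Q_def by auto
    next
      show "?M - G \<subseteq> (\<Union>j<n-1. Q j)"
      proof
        fix x assume x: "x \<in> ?M - G"
        define j where "j = (if own x = n-1 then b else own x)"
        have jj: "j < n-1" "\<sigma> j = own x" using own[OF x] b j_def \<sigma>_def by auto
        have "x \<in> Q j" using x jj(2) Q_def by auto
        thus "x \<in> (\<Union>j<n-1. Q j)" using jj(1) by blast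
      qed
    qed
  next
    fix j l assume "j < n-1" "l < n-1" "j \<noteq> l"
    hence "\<sigma> j \<noteq> \<sigma> l" unfolding \<sigma>_def by auto
    thus "Q j \<inter> Q l = {}" unfolding Q_def by auto
  qed
  have "Min ((\<lambda>j. \<Sum>g\<in>P j. v g) ` {..<n}) \<le> Min ((\<lambda>j. \<Sum>g\<in>Q j. v g) ` {..<n-1})"
  proof (rule Min.boundedI)
    show "finite ((\<lambda>j. \<Sum>g\<in>Q j. v g) ` {..<n-1})" by simp
    show "(\<lambda>j. \<Sum>g\<in>Q j. v g) ` {..<n-1} \<noteq> {}"
    proof -
      have "0 \<in> {..<n-1}" using n2 by simp
      thus ?thesis by blast
    qed
  next
    fix a assume "a \<in> (\<lambda>j. \<Sum>g\<in>Q j. v g) ` {..<n-1}"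
    then obtain j where j: "j < n-1" "a = sum v (Q j)" by auto
    have s: "\<sigma> j < n" "\<sigma> j \<noteq> b" using j b \<sigma>_def by auto
    have "Min ((\<lambda>j. \<Sum>g\<in>P j. v g) ` {..<n}) \<le> sum v (P (\<sigma> j))"
      by (rule Min_le) (use s in auto)
    also have "\<dots> \<le> a" using Rsup[OF s] j Q_def by simp
    finally show "Min ((\<lambda>j. \<Sum>g\<in>P j. v g) ` {..<n}) \<le> a" .
  qed
  thus ?thesis using part by blast
qed

lemma mms_ge:
  fixes v :: "nat \<Rightarrow> real"
  assumes nonneg: "\<forall>g\<in>{1..m}. v g \<ge> 0" and n2: "n \<ge> 2" and S': "S' \<subseteq> {1..m}"
    and H: "\<And>P. is_d_partition n S P \<Longrightarrow> \<exists>Q. is_d_partition (n-1) S' Q \<and>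
     Min ((\<lambda>j. \<Sum>g\<in>P j. v g) ` {..<n}) \<le> Min ((\<lambda>j. \<Sum>g\<in>Q j. v g) ` {..<n-1})"
  shows "MMS n v S \<le> MMS (n-1) v S'"
  unfolding MMS_def
proof (rule cSup_least)
  have "is_d_partition n S (\<lambda>k. if k = 0 then S else {})"
    unfolding is_d_partition_def using n2 by auto
  thus "{Min ((\<lambda>k. \<Sum>g\<in>P k. v g) ` {..<n}) |P. is_d_partition n S P} \<noteq> {}" by blast
next
  let ?A' = "{Min ((\<lambda>k. \<Sum>g\<in>P k. v g) ` {..<n-1}) |P. is_d_partition (n-1) S' P}"
  have bdd: "bdd_above ?A'"
  proof (rule bdd_aboveI)
    fix x assume "x \<in> ?A'"
    then obtain Q where Q: "is_d_partition (n-1) S' Q" "x = Min ((\<lambda>k. \<Sum>g\<in>Q k. v g) ` {..<n-1})"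
      by blast
    have "0 \<in> {..<n-1}" using n2 by simp
    hence "x \<le> sum v (Q 0)" unfolding Q(2) by (intro Min_le) auto
    also have "\<dots> \<le> sum v S'"
    proof (rule sum_mono2)
      show "finite S'" using S' finite_subset by blast
      show "Q 0 \<subseteq> S'" using Q(1) n2 unfolding is_d_partition_def by auto
      show "\<And>b. b \<in> S' - Q 0 \<Longrightarrow> 0 \<le> v b" using S' nonneg by auto
    qed
    finally show "x \<le> sum v S'" .
  qed
  fix x assume "x \<in> {Min ((\<lambda>k. \<Sum>g\<in>P k. v g) ` {..<n}) |P. is_d_partition n S P}"
  then obtain P where P: "is_d_partition n S P" "x = Min ((\<lambda>k. \<Sum>g\<in>P k. v g) ` {..<n})" by blast
  obtain Q where Q: "is_d_partition (n-1) S' Q"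
    "x \<le> Min ((\<lambda>j. \<Sum>g\<in>Q j. v g) ` {..<n-1})" using H[OF P(1)] P(2) by blast
  have "Min ((\<lambda>j. \<Sum>g\<in>Q j. v g) ` {..<n-1}) \<in> ?A'" using Q(1) by blast
  thus "x \<le> Sup ?A'" using Q(2) cSup_upper2[OF _ _ bdd] by blast
qed

theorem lemma15:
  fixes n m :: nat and V :: "nat \<Rightarrow> nat \<Rightarrow> real" and i :: nat
  assumes "ordered_instance n m V" and "n \<ge> 2" and "i \<in> {1..n}"
  shows "(\<forall>g1 g2 g3. g1 \<in> {1..m} \<and> g2 \<in> {1..m} \<and> g3 \<in> {1..m} \<and>
            distinct [g1, g2, g3] \<and>
            g1 \<ge> 2*n - 1 \<and> g2 \<ge> 2*n \<and> g3 \<ge> 2*n + 1 \<longrightarrow>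
            MMS (n - 1) (V i) ({1..m} - {g1, g2, g3}) \<ge> MMS n (V i) {1..m})
       \<and> (\<forall>g1 g2 g3 g4. g1 \<in> {1..m} \<and> g2 \<in> {1..m} \<and> g3 \<in> {1..m} \<and> g4 \<in> {1..m} \<and>
            distinct [g1, g2, g3, g4] \<and>
            g1 \<ge> 3*n - 2 \<and> g2 \<ge> 3*n - 1 \<and> g3 \<ge> 3*n \<and> g4 \<ge> 3*n + 1 \<longrightarrow>
            MMS (n - 1) (V i) ({1..m} - {g1, g2, g3, g4}) \<ge> MMS n (V i) {1..m})"
proof -
  have nonneg: "\<forall>g\<in>{1..m}. V i g \<ge> 0"
    and mono: "\<forall>g h. 1 \<le> g \<longrightarrow> g \<le> h \<longrightarrow> h \<le> m \<longrightarrow> V i h \<le> V i g"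
    using assms(1,3) unfolding ordered_instance_def by auto
  have gen: "MMS n (V i) {1..m} \<le> MMS (n-1) (V i) ({1..m} - G)"
    if "G \<subseteq> {1..m}" "card G = k" "k \<ge> 1" "\<forall>g\<in>G. (k-1)*(n-1) < g" for G k
  proof (rule mms_ge[OF nonneg assms(2)])
    show "{1..m} - G \<subseteq> {1..m}" by auto
    fix P assume "is_d_partition n {1..m} P"
    thus "\<exists>Q. is_d_partition (n-1) ({1..m} - G) Q \<and>
     Min ((\<lambda>j. \<Sum>g\<in>P j. V i g) ` {..<n}) \<le> Min ((\<lambda>j. \<Sum>g\<in>Q j. V i g) ` {..<n-1})"
      by (rule key[OF nonneg mono assms(2) that])
  qed
  show ?thesis
  proof (intro conjI allI impI)
    fix g1 g2 g3 assume h: "g1 \<in> {1..m} \<and> g2 \<in> {1..m} \<and> g3 \<in> {1..m} \<and>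
            distinct [g1, g2, g3] \<and> g1 \<ge> 2*n - 1 \<and> g2 \<ge> 2*n \<and> g3 \<ge> 2*n + 1"
    show "MMS (n - 1) (V i) ({1..m} - {g1, g2, g3}) \<ge> MMS n (V i) {1..m}"
      by (rule gen[of _ 3]) (use h assms(2) in auto)
  next
    fix g1 g2 g3 g4 assume h: "g1 \<in> {1..m} \<and> g2 \<in> {1..m} \<and> g3 \<in> {1..m} \<and> g4 \<in> {1..m} \<and>
            distinct [g1, g2, g3, g4] \<and>
            g1 \<ge> 3*n - 2 \<and> g2 \<ge> 3*n - 1 \<and> g3 \<ge> 3*n \<and> g4 \<ge> 3*n + 1"
    show "MMS (n - 1) (V i) ({1..m} - {g1, g2, g3, g4}) \<ge> MMS n (V i) {1..m}"
      by (rule gen[of _ 4]) (use h assms(2) in auto)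
  qed
qed

end
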